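(* Let $H\in\mathbb{R}^{m\times d}$, $L\in\mathbb{R}^{\ell\times d}$, $y\in\mathbb{R}^m$, $\tilde y\in\mathbb{R}^\ell$ be such that the solution sets $\{\theta\in\mathbb{R}^d: H\theta=y\}$ and $\{\theta\in\mathbb{R}^d: L\theta=\tilde y\}$ are both non-empty. Let $\Sigma\in\mathbb{R}^{d\times d}$ be symmetric positive semidefinite. Then: (a) If there is $a\in\mathbb{R}\setminus\{0\}$ with $a\,L^\top L=H^\top H$ and $a\,L^\top\tilde y=H^\top y$, then $\{\theta: H\theta=y\}=\{\theta: L\theta=\tilde y\}$. (b) Suppose $\operatorname{tr}(H\Sigma H^\top)>0$ and $\operatorname{tr}(L\Sigma L^\top)>0$. Then $ATS_s(x,H,y)=ATS_s(x,L,\tilde y)$ for all $x\in\mathbb{R}^d$ if and only if there exists $a>0$ with $a\,L^\top L=H^\top H$, $a\,L^\top\tilde y=H^\top y$ and $\|y\|=\sqrt{a}\,\|\tilde y\|$. (c) Suppose additionally $\operatorname{tr}(H\Sigma H^\top H\Sigma H^\top)\neq 0$ and $\operatorname{tr}(L\Sigma L^\top L\Sigma L^\top)\neq0$. Then $ATS_F(x,H,y)=ATS_F(x,L,\tilde y)$ for all $x\in\mathbb{R}^d$ if and only if there exists $a>0$ with $a\,L^\top L=H^\top H$, $a\,L^\top\tilde y=H^\top y$ and $\|y\|=\sqrt{a}\,\|\tilde y\|$.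
   Context: For a matrix $H\in\mathbb{R}^{m\times d}$, a vector $y\in\mathbb{R}^m$ and $x\in\mathbb{R}^d$, the Anova-type statistic is $ATS(x,H,y)=(Hx-y)^\top(Hx-y)$. Given a fixed symmetric positive semidefinite matrix $\Sigma\in\mathbb{R}^{d\times d}$, $ATS_s(x,H,y)=ATS(x,H,y)/\operatorname{tr}(H\Sigma H^\top)$ and $ATS_F(x,H,y)=ATS_s(x,H,y)\cdot\frac{[\operatorname{tr}(H\Sigma H^\top)]^2}{\operatorname{tr}(H\Sigma H^\top H\Sigma H^\top)}$. The same $\Sigma$ is used for both $H$ and $L$. $\|\cdot\|$ is the Euclidean norm. *)

theory Defs
  imports "HOL-Analysis.Analysis"
begin

definition psd :: "real^'d^'d \<Rightarrow> bool" where
  "psd S \<longleftrightarrow> transpose S = S \<and> (\<forall>v. 0 \<le> v \<bullet> (S *v v))"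

definition ATS :: "real^'d \<Rightarrow> real^'d^'m \<Rightarrow> real^'m \<Rightarrow> real" where
  "ATS x H y = (H *v x - y) \<bullet> (H *v x - y)"

definition ATS_s :: "real^'d^'d \<Rightarrow> real^'d \<Rightarrow> real^'d^'m \<Rightarrow> real^'m \<Rightarrow> real" where
  "ATS_s S x H y = ATS x H y / trace (H ** S ** transpose H)"

definition ATS_F :: "real^'d^'d \<Rightarrow> real^'d \<Rightarrow> real^'d^'m \<Rightarrow> real^'m \<Rightarrow> real" where
  "ATS_F S x H y = ATS_s S x H y * (trace (H ** S ** transpose H))^2
     / trace (H ** S ** transpose H ** H ** S ** transpose H)"

end

theory Submission imports Defs begin

lemma adj: "(H *v x) \<bullet> (w::real^'m) = x \<bullet> (transpose H *v w)"
  for H :: "real^'d^'m"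
proof -
  have "(H *v x) \<bullet> w = w \<bullet> (H *v x)" by (rule inner_commute)
  also have "\<dots> = (w v* H) \<bullet> x" by (rule dot_lmul_matrix[symmetric])
  also have "w v* H = transpose H *v w"
    using vector_transpose_matrix[of w "transpose H"] by simp
  finally show ?thesis by (simp add: inner_commute)
qed

lemma quad: "(H *v x) \<bullet> (H *v z) = x \<bullet> ((transpose H ** H) *v z)"
  for H :: "real^'d^'m"
  by (simp only: adj matrix_vector_mul_assoc)

lemma ATS_exp: "ATS x H y = x \<bullet> ((transpose H ** H) *v x) - 2 * ((transpose H *v y) \<bullet> x) + y \<bullet> y"
proof -
  have "ATS x H y = (H *v x) \<bullet> (H *v x) - 2 * ((H *v x) \<bullet> y) + y \<bullet> y"
  proof -
    have c: "y \<bullet> (H *v x) = (H *v x) \<bullet> y" by (rule inner_commute)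
    show ?thesis unfolding ATS_def inner_diff_left inner_diff_right c by simp
  qed
  moreover have "(H *v x) \<bullet> y = (transpose H *v y) \<bullet> x"
    using adj[of H x y] inner_commute[of x "transpose H *v y"] by (rule trans)
  ultimately show ?thesis by (simp only: quad)
qed

lemma trace_scaleR: "trace (a *\<^sub>R (A::real^'n^'n)) = a * trace A"
  by (simp add: trace_def sum_distrib_left)

lemma scaleR_mmul: "(a *\<^sub>R (A::real^'n^'m)) ** (B::real^'k^'n) = a *\<^sub>R (A ** B)"
  by (rule scalar_matrix_assoc[symmetric])

lemma scaleR_mmul2: "(A::real^'n^'m) ** (a *\<^sub>R (B::real^'k^'n)) = a *\<^sub>R (A ** B)"
  by (simp only: matrix_scalar_ac scalar_matrix_assoc)

lemma tr1: "trace (H ** S ** transpose H) = trace ((transpose H ** H) ** S)"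
  for H :: "real^'d^'m" and S :: "real^'d^'d"
proof -
  have "trace ((H ** S) ** transpose H) = trace (transpose H ** (H ** S))" by (rule trace_mul_sym)
  then show ?thesis by (simp only: matrix_mul_assoc)
qed

lemma tr2: "trace (H ** S ** transpose H ** H ** S ** transpose H)
   = trace ((transpose H ** H) ** S ** (transpose H ** H) ** S)"
  for H :: "real^'d^'m" and S :: "real^'d^'d"
proof -
  have "trace ((H ** S ** transpose H ** H ** S) ** transpose H) = trace (transpose H ** (H ** S ** transpose H ** H ** S))" by (rule trace_mul_sym)
  then show ?thesis by (simp only: matrix_mul_assoc)
qed

lemma sym_adj: "transpose M = M \<Longrightarrow> (M *v z) \<bullet> x = z \<bullet> (M *v x)"
  for M :: "real^'d^'d"
  using adj[of M z x] by simp

lemma mneg: "M *v (- x) = - (M *v x)" for M :: "real^'d^'m"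
proof -
  have "M *v x + M *v (-x) = 0" using matrix_vector_right_distrib[of M x "-x", symmetric] by simp
  then show ?thesis by (simp add: eq_neg_iff_add_eq_0 add.commute)
qed

lemma quad_zero:
  fixes M :: "real^'d^'d"
  assumes s: "transpose M = M" and q: "\<forall>x. x \<bullet> (M *v x) = 0"
  shows "M = 0"
proof -
  have z: "z \<bullet> (M *v x) = 0" for x z
  proof -
    have "(x+z) \<bullet> (M *v (x+z)) = x \<bullet> (M *v x) + x \<bullet> (M *v z) + z \<bullet> (M *v x) + z \<bullet> (M *v z)"
      by (simp only: matrix_vector_right_distrib inner_add_left inner_add_right add.assoc)
    moreover have "x \<bullet> (M *v z) = z \<bullet> (M *v x)"
      using sym_adj[OF s, of z x] inner_commute[of x "M *v z"] by simp
    ultimately show ?thesis using q[rule_format, of "x+z"] q[rule_format, of x] q[rule_format, of z] by simp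
  qed
  have "M *v x = 0 *v x" for x using z[of "M *v x" x] by simp
  then show ?thesis using matrix_eq by blast
qed

lemma K:
  fixes M :: "real^'d^'d"
  assumes s: "transpose M = M" and f: "\<forall>x. x \<bullet> (M *v x) - 2 * (v \<bullet> x) + k = 0"
  shows "M = 0 \<and> v = 0 \<and> k = 0"
proof -
  have k0: "k = 0" using f[rule_format, of 0] by simp
  have "x \<bullet> (M *v x) = 0" for x
  proof -
    have "(-x) \<bullet> (M *v (-x)) - 2 * (v \<bullet> (-x)) + k = 0" using f by blast
    then have "x \<bullet> (M *v x) + 2 * (v \<bullet> x) + k = 0" by (simp add: mneg)
    then show ?thesis using f[rule_format, of x] k0 by simp
  qed
  then have M0: "M = 0" using quad_zero[OF s] by blast
  have "v \<bullet> v = 0" using f[rule_format, of v] M0 k0 by simp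
  then show ?thesis using M0 k0 by simp
qed

lemma transpose_diff: "transpose (A - B) = transpose A - transpose (B::real^'n^'m)"
  by (simp add: transpose_def vec_eq_iff)

lemma G:
  fixes H :: "real^'d^'m" and L :: "real^'d^'l"
  assumes a: "\<forall>x. ATS x H y = c * ATS x L yt"
  shows "c *\<^sub>R (transpose L ** L) = transpose H ** H \<and> c *\<^sub>R (transpose L *v yt) = transpose H *v y
      \<and> y \<bullet> y = c * (yt \<bullet> yt)"
proof -
  define M where "M = transpose H ** H - c *\<^sub>R (transpose L ** L)"
  define v where "v = transpose H *v y - c *\<^sub>R (transpose L *v yt)"
  define k where "k = y \<bullet> y - c * (yt \<bullet> yt)"
  have s: "transpose M = M"
    unfolding M_def transpose_diff transpose_scalar matrix_transpose_mul by simp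
  have "x \<bullet> (M *v x) - 2 * (v \<bullet> x) + k = 0" for x
  proof -
    have "x \<bullet> (M *v x) = x \<bullet> ((transpose H ** H) *v x) - c * (x \<bullet> ((transpose L ** L) *v x))"
      unfolding M_def by (simp only: matrix_vector_mult_diff_rdistrib scaleR_matrix_vector_assoc[symmetric] inner_diff_right inner_scaleR_right)
    moreover have "v \<bullet> x = (transpose H *v y) \<bullet> x - c * ((transpose L *v yt) \<bullet> x)"
      unfolding v_def by (simp only: inner_diff_left inner_scaleR_left)
    ultimately show ?thesis using a[rule_format, of x] unfolding ATS_exp k_def by (simp add: algebra_simps)
  qed
  then have "M = 0 \<and> v = 0 \<and> k = 0" using K[OF s] by blast
  then show ?thesis unfolding M_def v_def k_def by simp
qed

lemma G2:
  fixes H :: "real^'d^'m" and L :: "real^'d^'l"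
  assumes r1: "c *\<^sub>R (transpose L ** L) = transpose H ** H" and r2: "c *\<^sub>R (transpose L *v yt) = transpose H *v y"
    and r3: "y \<bullet> y = c * (yt \<bullet> yt)"
  shows "ATS x H y = c * ATS x L yt"
proof -
  have "x \<bullet> ((transpose H ** H) *v x) = c * (x \<bullet> ((transpose L ** L) *v x))"
    unfolding r1[symmetric] by (simp only: scaleR_matrix_vector_assoc[symmetric] inner_scaleR_right)
  moreover have "(transpose H *v y) \<bullet> x = c * ((transpose L *v yt) \<bullet> x)"
    unfolding r2[symmetric] by (simp only: inner_scaleR_left)
  ultimately show ?thesis unfolding ATS_exp r3 by (simp add: algebra_simps)
qed

lemma T1:
  fixes H :: "real^'d^'m" and L :: "real^'d^'l"
  assumes r1: "c *\<^sub>R (transpose L ** L) = transpose H ** H"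
  shows "trace (H ** S ** transpose H) = c * trace (L ** S ** transpose L)"
    "trace (H ** S ** transpose H ** H ** S ** transpose H) = c^2 * trace (L ** S ** transpose L ** L ** S ** transpose L)"
  unfolding tr1 tr2 r1[symmetric] by (simp_all only: scaleR_mmul scaleR_mmul2 trace_scaleR scaleR_scaleR power2_eq_square)

lemma PT: "(transpose H ** H) *v w = 0 \<Longrightarrow> H *v w = 0" for H :: "real^'d^'m"
  using quad[of H w w] by simp

lemma partA:
  fixes H :: "real^'d^'m" and L :: "real^'d^'l"
  assumes a0: "a \<noteq> 0" and r1: "a *\<^sub>R (transpose L ** L) = transpose H ** H"
    and r2: "a *\<^sub>R (transpose L *v yt) = transpose H *v y"
    and t0: "H *v t0 = y" and t1: "L *v t1 = yt"
  shows "{\<theta>. H *v \<theta> = y} = {\<theta>. L *v \<theta> = yt}"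
proof (intro set_eqI iffI; simp only: mem_Collect_eq)
  fix t assume h: "L *v t = yt"
  have "(transpose H ** H) *v t = a *\<^sub>R (transpose L *v (L *v t))"
    by (simp only: r1[symmetric] scaleR_matrix_vector_assoc[symmetric] matrix_vector_mul_assoc)
  also have "\<dots> = (transpose H ** H) *v t0"
    by (simp only: h r2 t0[symmetric] matrix_vector_mul_assoc)
  finally have "(transpose H ** H) *v (t - t0) = 0" by (simp only: matrix_vector_mult_diff_distrib) simp
  then have "H *v (t - t0) = 0" by (rule PT)
  then show "H *v t = y" using t0 by (simp add: matrix_vector_mult_diff_distrib)
next
  fix t assume h: "H *v t = y"
  have "a *\<^sub>R ((transpose L ** L) *v t) = transpose H *v (H *v t)"
    by (simp only: r1 scaleR_matrix_vector_assoc matrix_vector_mul_assoc)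
  also have "\<dots> = a *\<^sub>R ((transpose L ** L) *v t1)"
    by (simp only: h r2[symmetric] t1[symmetric] matrix_vector_mul_assoc)
  finally have "(transpose L ** L) *v t = (transpose L ** L) *v t1" using a0 by simp
  then have "(transpose L ** L) *v (t - t1) = 0" by (simp only: matrix_vector_mult_diff_distrib) simp
  then have "L *v (t - t1) = 0" by (rule PT)
  then show "L *v t = yt" using t1 by (simp add: matrix_vector_mult_diff_distrib)
qed

lemma N: "c \<ge> 0 \<Longrightarrow> (norm y = sqrt c * norm yt) \<longleftrightarrow> (y \<bullet> y = c * (yt \<bullet> (yt::real^'m)))"
  for y :: "real^'k"
proof
  assume "c \<ge> 0" "norm y = sqrt c * norm yt"
  then have "norm y ^ 2 = c * norm yt ^ 2" by (simp add: power_mult_distrib)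
  then show "y \<bullet> y = c * (yt \<bullet> yt)" by (simp add: power2_norm_eq_inner)
next
  assume "c \<ge> 0" "y \<bullet> y = c * (yt \<bullet> yt)"
  then show "norm y = sqrt c * norm yt" by (simp add: norm_eq_sqrt_inner real_sqrt_mult)
qed

theorem theorem2:
  fixes H :: "real^'d^'m" and L :: "real^'d^'l" and y :: "real^'m" and yt :: "real^'l"
    and S :: "real^'d^'d"
  assumes solH: "{\<theta>. H *v \<theta> = y} \<noteq> {}"
    and solL: "{\<theta>. L *v \<theta> = yt} \<noteq> {}"
    and S_psd: "psd S"
  shows
    "(\<forall>a::real. a \<noteq> 0 \<and> a *\<^sub>R (transpose L ** L) = transpose H ** H
        \<and> a *\<^sub>R (transpose L *v yt) = transpose H *v y
        \<longrightarrow> {\<theta>. H *v \<theta> = y} = {\<theta>. L *v \<theta> = yt})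
   \<and> (trace (H ** S ** transpose H) > 0 \<and> trace (L ** S ** transpose L) > 0 \<longrightarrow>
        ((\<forall>x. ATS_s S x H y = ATS_s S x L yt) \<longleftrightarrow>
         (\<exists>a::real. a > 0 \<and> a *\<^sub>R (transpose L ** L) = transpose H ** H
           \<and> a *\<^sub>R (transpose L *v yt) = transpose H *v y \<and> norm y = sqrt a * norm yt)))
   \<and> (trace (H ** S ** transpose H) > 0 \<and> trace (L ** S ** transpose L) > 0
       \<and> trace (H ** S ** transpose H ** H ** S ** transpose H) \<noteq> 0
       \<and> trace (L ** S ** transpose L ** L ** S ** transpose L) \<noteq> 0 \<longrightarrow>
        ((\<forall>x. ATS_F S x H y = ATS_F S x L yt) \<longleftrightarrow>
         (\<exists>a::real. a > 0 \<and> a *\<^sub>R (transpose L ** L) = transpose H ** H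
           \<and> a *\<^sub>R (transpose L *v yt) = transpose H *v y \<and> norm y = sqrt a * norm yt)))"
proof (intro conjI impI allI)
  obtain t0 where t0: "H *v t0 = y" using solH by blast
  obtain t1 where t1: "L *v t1 = yt" using solL by blast
  fix a :: real
  assume "a \<noteq> 0 \<and> a *\<^sub>R (transpose L ** L) = transpose H ** H
        \<and> a *\<^sub>R (transpose L *v yt) = transpose H *v y"
  then show "{\<theta>. H *v \<theta> = y} = {\<theta>. L *v \<theta> = yt}" using partA t0 t1 by blast
next
  define tH where "tH = trace (H ** S ** transpose H)"
  define tL where "tL = trace (L ** S ** transpose L)"
  assume "trace (H ** S ** transpose H) > 0 \<and> trace (L ** S ** transpose L) > 0"
  then have pH: "tH > 0" and pL: "tL > 0" unfolding tH_def tL_def by auto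
  show "(\<forall>x. ATS_s S x H y = ATS_s S x L yt) \<longleftrightarrow>
         (\<exists>a::real. a > 0 \<and> a *\<^sub>R (transpose L ** L) = transpose H ** H
           \<and> a *\<^sub>R (transpose L *v yt) = transpose H *v y \<and> norm y = sqrt a * norm yt)"
  proof
    assume e: "\<forall>x. ATS_s S x H y = ATS_s S x L yt"
    have "\<forall>x. ATS x H y = (tH / tL) * ATS x L yt"
    proof
      fix x
      have "ATS x H y / tH = ATS x L yt / tL" using e unfolding ATS_s_def tH_def tL_def by blast
      then show "ATS x H y = (tH / tL) * ATS x L yt" using pH pL by (simp add: field_simps)
    qed
    from G[OF this] have r: "(tH / tL) *\<^sub>R (transpose L ** L) = transpose H ** H"
      "(tH / tL) *\<^sub>R (transpose L *v yt) = transpose H *v y" "y \<bullet> y = (tH / tL) * (yt \<bullet> yt)" by auto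
    have c: "tH / tL > 0" using pH pL by simp
    show "\<exists>a::real. a > 0 \<and> a *\<^sub>R (transpose L ** L) = transpose H ** H
           \<and> a *\<^sub>R (transpose L *v yt) = transpose H *v y \<and> norm y = sqrt a * norm yt"
      using r c N[of "tH/tL" y yt] by auto
  next
    assume "\<exists>a::real. a > 0 \<and> a *\<^sub>R (transpose L ** L) = transpose H ** H
           \<and> a *\<^sub>R (transpose L *v yt) = transpose H *v y \<and> norm y = sqrt a * norm yt"
    then obtain a where a: "a > 0" and r1: "a *\<^sub>R (transpose L ** L) = transpose H ** H"
      and r2: "a *\<^sub>R (transpose L *v yt) = transpose H *v y" and n: "norm y = sqrt a * norm yt" by blast
    have r3: "y \<bullet> y = a * (yt \<bullet> yt)" using N[of a y yt] a n by simp
    have tr: "tH = a * tL" unfolding tH_def tL_def using T1(1)[OF r1] .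
    show "\<forall>x. ATS_s S x H y = ATS_s S x L yt"
    proof
      fix x
      have "ATS x H y = a * ATS x L yt" using G2[OF r1 r2 r3] .
      then show "ATS_s S x H y = ATS_s S x L yt" unfolding ATS_s_def tH_def[symmetric] tL_def[symmetric] tr
        using a by simp
    qed
  qed
next
  define tH where "tH = trace (H ** S ** transpose H)"
  define tL where "tL = trace (L ** S ** transpose L)"
  define qH where "qH = trace (H ** S ** transpose H ** H ** S ** transpose H)"
  define qL where "qL = trace (L ** S ** transpose L ** L ** S ** transpose L)"
  assume "trace (H ** S ** transpose H) > 0 \<and> trace (L ** S ** transpose L) > 0
       \<and> trace (H ** S ** transpose H ** H ** S ** transpose H) \<noteq> 0
       \<and> trace (L ** S ** transpose L ** L ** S ** transpose L) \<noteq> 0"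
  then have pH: "tH > 0" and pL: "tL > 0" and qH: "qH \<noteq> 0" and qL: "qL \<noteq> 0"
    unfolding tH_def tL_def qH_def qL_def by auto
  have F: "ATS_F S x H y = ATS x H y * (tH / qH)" "ATS_F S x L yt = ATS x L yt * (tL / qL)" for x
    unfolding ATS_F_def ATS_s_def tH_def[symmetric] tL_def[symmetric] qH_def[symmetric] qL_def[symmetric]
    using pH pL by (simp_all add: power2_eq_square)
  show "(\<forall>x. ATS_F S x H y = ATS_F S x L yt) \<longleftrightarrow>
         (\<exists>a::real. a > 0 \<and> a *\<^sub>R (transpose L ** L) = transpose H ** H
           \<and> a *\<^sub>R (transpose L *v yt) = transpose H *v y \<and> norm y = sqrt a * norm yt)"
  proof
    assume e: "\<forall>x. ATS_F S x H y = ATS_F S x L yt"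
    define c where "c = (tL / qL) * (qH / tH)"
    have "\<forall>x. ATS x H y = c * ATS x L yt"
    proof
      fix x
      have "ATS x H y * (tH / qH) = ATS x L yt * (tL / qL)" using e F by metis
      then show "ATS x H y = c * ATS x L yt" unfolding c_def using pH pL qH qL by (simp add: field_simps)
    qed
    from G[OF this] have r: "c *\<^sub>R (transpose L ** L) = transpose H ** H"
      "c *\<^sub>R (transpose L *v yt) = transpose H *v y" "y \<bullet> y = c * (yt \<bullet> yt)" by auto
    have "tH = c * tL" unfolding tH_def tL_def using T1(1)[OF r(1)] .
    then have cp: "c > 0" using pH pL by (metis mult_nonpos_nonneg less_le_not_le not_le order_less_imp_le)
    show "\<exists>a::real. a > 0 \<and> a *\<^sub>R (transpose L ** L) = transpose H ** H
           \<and> a *\<^sub>R (transpose L *v yt) = transpose H *v y \<and> norm y = sqrt a * norm yt"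
      using r cp N[of c y yt] by auto
  next
    assume "\<exists>a::real. a > 0 \<and> a *\<^sub>R (transpose L ** L) = transpose H ** H
           \<and> a *\<^sub>R (transpose L *v yt) = transpose H *v y \<and> norm y = sqrt a * norm yt"
    then obtain a where a: "a > 0" and r1: "a *\<^sub>R (transpose L ** L) = transpose H ** H"
      and r2: "a *\<^sub>R (transpose L *v yt) = transpose H *v y" and n: "norm y = sqrt a * norm yt" by blast
    have r3: "y \<bullet> y = a * (yt \<bullet> yt)" using N[of a y yt] a n by simp
    have tr: "tH = a * tL" unfolding tH_def tL_def using T1(1)[OF r1] .
    have qr: "qH = a^2 * qL" unfolding qH_def qL_def using T1(2)[OF r1] .
    show "\<forall>x. ATS_F S x H y = ATS_F S x L yt"
    proof
      fix x
      have "ATS x H y = a * ATS x L yt" using G2[OF r1 r2 r3] .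
      then show "ATS_F S x H y = ATS_F S x L yt" unfolding F tr qr
        using a qL by (simp add: field_simps power2_eq_square)
    qed
  qed
qed

end
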